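(* Assume the setting described in the context. There exists a sequence of families $\{\gamma_l^{\epsilon^k}\}_{l=1}^k\subset\Gamma$, indexed by $\epsilon^k\in\Sigma_d^k$, $k\in\mathbb{N}$, such that, setting $V_{\epsilon^k}=\gamma_1^{\epsilon^k}\circ g_{\epsilon_1}\circ\dots\circ\gamma_k^{\epsilon^k}\circ g_{\epsilon_k}(\mathbb{D})$, the following hold: (1) for all $k\geq 2$ and all $\epsilon^k$: $V_{\epsilon^k}\subset V_{\epsilon^{k-1}}$, where $\epsilon^{k-1}=(\epsilon_1,\dots,\epsilon_{k-1})$; (2) for all $k\geq 2$, all $\epsilon^k$ and all $l=2,\dots,k$: $\gamma_l^{\epsilon^k}=\gamma_{l-1}^{\sigma(\epsilon^k)}$, where $\sigma(\epsilon^k)=(\epsilon_2,\dots,\epsilon_k)$; (3) for all $k\geq 1$ and all $\epsilon^k,\widehat{\epsilon}^k\in\Sigma_d^k$: if $\phi(V_{\epsilon^k})=\phi(V_{\widehat{\epsilon}^k})$ then $V_{\epsilon^k}=V_{\widehat{\epsilon}^k}$.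
   Context: Setting: $U\subset\mathbb{C}$ is a domain conformally isomorphic to $\mathbb{D}$; $U'=U_1\cup\dots\cup U_N$ is relatively compact in $U$, with the $U_i$ pairwise disjoint domains each conformally isomorphic to $\mathbb{D}$; $f:U'\to U$ is a proper holomorphic map of degree $d>1$ (sum of the degrees of $f:U_i\to U$); $K_f=\{z\in U': f^n(z)\in U'\ \forall n\}$, $J_f=\partial K_f$, and it is assumed that $K_f=J_f$ is a Cantor set containing all critical points of $f$. Fix $w\in U\setminus U'$, let $w_0,\dots,w_{d-1}$ be its $d$ distinct preimages under $f$, and let $i(j)$ be defined by $w_j\in U_{i(j)}$. Let $\phi:\mathbb{D}\to U\setminus J_f$ be a universal covering with $\phi(0)=w$, and let $\Gamma$ be its group of deck transformations (automorphisms $\gamma$ of $\mathbb{D}$ with $\phi\circ\gamma=\phi$). For each $i$ fix a connected component $V_i$ of $\phi^{-1}(U_i\setminus J_f)$, and let $g_0,\dots,g_{d-1}:\mathbb{D}\to\mathbb{D}$ be univalent holomorphic maps with $f\circ\phi\circ g_j=\phi$, $\phi(g_j(0))=w_j$ and $g_j(\mathbb{D})=V_{i(j)}$. $\Sigma_d^k=\{0,\dots,d-1\}^k$ is the set of $k$-blocks $\epsilon^k=(\epsilon_1,\dots,\epsilon_k)$, and $\sigma$ acts on blocks by $\sigma(\epsilon_1,\dots,\epsilon_k)=(\epsilon_2,\dots,\epsilon_k)$. *)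

theory Defs
  imports "HOL-Complex_Analysis.Complex_Analysis"
begin

abbreviation unit_disc :: "complex set" where "unit_disc \<equiv> ball 0 1"

definition conf_disc :: "complex set \<Rightarrow> bool" where
  "conf_disc S \<longleftrightarrow> open S \<and> connected S \<and>
     (\<exists>h. h holomorphic_on S \<and> inj_on h S \<and> h ` S = unit_disc)"

definition proper_on :: "(complex \<Rightarrow> complex) \<Rightarrow> complex set \<Rightarrow> complex set \<Rightarrow> bool" where
  "proper_on f A B \<longleftrightarrow> continuous_on A f \<and> f ` A \<subseteq> B \<and>
     (\<forall>K. compact K \<and> K \<subseteq> B \<longrightarrow> compact {z\<in>A. f z \<in> K})"

definition hol_degree :: "(complex \<Rightarrow> complex) \<Rightarrow> complex set \<Rightarrow> complex set \<Rightarrow> nat \<Rightarrow> bool" where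
  "hol_degree f A B d \<longleftrightarrow>
     (\<forall>y\<in>B. finite {z\<in>A. f z = y} \<and>
        (\<Sum>z\<in>{z\<in>A. f z = y}. nat (zorder (\<lambda>x. f x - y) z)) = d)"

definition filled_set :: "(complex \<Rightarrow> complex) \<Rightarrow> complex set \<Rightarrow> complex set" where
  "filled_set f U' = {z\<in>U'. \<forall>n. (f ^^ n) z \<in> U'}"

definition julia_set :: "(complex \<Rightarrow> complex) \<Rightarrow> complex set \<Rightarrow> complex set" where
  "julia_set f U' = frontier (filled_set f U')"

definition cantor_set :: "complex set \<Rightarrow> bool" where
  "cantor_set S \<longleftrightarrow> S \<noteq> {} \<and> compact S \<and> (\<forall>x\<in>S. x islimpt S) \<and>
     (\<forall>C. C \<subseteq> S \<and> connected C \<longrightarrow> (\<exists>a. C \<subseteq> {a}))"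

definition deck_group :: "(complex \<Rightarrow> complex) \<Rightarrow> (complex \<Rightarrow> complex) set" where
  "deck_group \<phi> = {\<gamma>. \<gamma> holomorphic_on unit_disc \<and> bij_betw \<gamma> unit_disc unit_disc \<and>
                        (\<forall>z\<in>unit_disc. \<phi> (\<gamma> z) = \<phi> z)}"

text \<open>For a family gam (gam eps l = gamma_l^eps, l = 1..length eps) and maps g_j,
  the composite gamma_1 o g_{eps_1} o ... o gamma_k o g_{eps_k}.\<close>
definition block_map :: "(nat list \<Rightarrow> nat \<Rightarrow> complex \<Rightarrow> complex) \<Rightarrow> (nat \<Rightarrow> complex \<Rightarrow> complex)
     \<Rightarrow> nat list \<Rightarrow> complex \<Rightarrow> complex" where
  "block_map gam g eps = foldr (\<circ>) (map (\<lambda>l. gam eps (Suc l) \<circ> g (eps ! l)) [0..<length eps]) id"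

definition block_set :: "(nat list \<Rightarrow> nat \<Rightarrow> complex \<Rightarrow> complex) \<Rightarrow> (nat \<Rightarrow> complex \<Rightarrow> complex)
     \<Rightarrow> nat list \<Rightarrow> complex set" where
  "block_set gam g eps = block_map gam g eps ` unit_disc"

end

theory Submission imports Defs begin

lemma deck_id: "id \<in> deck_group \<phi>"
  unfolding deck_group_def by (auto simp: bij_betw_def)

lemma deck_comp: "\<gamma> \<in> deck_group \<phi> \<Longrightarrow> \<delta> \<in> deck_group \<phi> \<Longrightarrow> \<gamma> \<circ> \<delta> \<in> deck_group \<phi>"
proof -
  assume g: "\<gamma> \<in> deck_group \<phi>" and d: "\<delta> \<in> deck_group \<phi>"
  have a1: "\<gamma> holomorphic_on ball 0 1" and a2: "bij_betw \<gamma> (ball 0 1) (ball 0 1)"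
    and a3: "\<And>z. z \<in> ball 0 1 \<Longrightarrow> \<phi> (\<gamma> z) = \<phi> z" using g unfolding deck_group_def by blast+
  have a4: "\<delta> holomorphic_on ball 0 1" and a5: "bij_betw \<delta> (ball 0 1) (ball 0 1)"
    and a6: "\<And>z. z \<in> ball 0 1 \<Longrightarrow> \<phi> (\<delta> z) = \<phi> z" using d unfolding deck_group_def by blast+
  have im: "\<delta> ` ball 0 1 = ball 0 1" using a5 by (simp add: bij_betw_def)
  have "(\<gamma> \<circ> \<delta>) holomorphic_on ball 0 1"
    by (rule holomorphic_on_compose_gen[OF a4 a1]) (simp add: im)
  moreover have "bij_betw (\<gamma> \<circ> \<delta>) (ball 0 1) (ball 0 1)" using a2 a5 bij_betw_trans by blast
  moreover have "\<forall>z\<in>ball 0 1. \<phi> ((\<gamma> \<circ> \<delta>) z) = \<phi> z"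
  proof
    fix z :: complex assume z: "z \<in> ball 0 1"
    then have "\<delta> z \<in> ball 0 1" using im by blast
    then show "\<phi> ((\<gamma> \<circ> \<delta>) z) = \<phi> z" using a3 a6 z by simp
  qed
  ultimately show ?thesis unfolding deck_group_def by blast
qed

lemma deck_phi_image: "\<gamma> \<in> deck_group \<phi> \<Longrightarrow> S \<subseteq> ball 0 1 \<Longrightarrow> \<phi> ` (\<gamma> ` S) = \<phi> ` S"
proof -
  assume g: "\<gamma> \<in> deck_group \<phi>" and S: "S \<subseteq> ball 0 1"
  have "\<And>z. z \<in> S \<Longrightarrow> \<phi> (\<gamma> z) = \<phi> z" using g S unfolding deck_group_def by blast
  then show ?thesis by (simp add: image_image cong: image_cong)
qed

lemma deck_components:
  assumes gam: "\<gamma> \<in> deck_group \<phi>" and C: "C \<in> components (ball 0 1 \<inter> \<phi> -` W)"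
  shows "\<gamma> ` C \<in> components (ball 0 1 \<inter> \<phi> -` W)"
proof -
  have hol: "\<gamma> holomorphic_on ball 0 1" and bij: "bij_betw \<gamma> (ball 0 1) (ball 0 1)"
    and ph: "\<And>z. z \<in> ball 0 1 \<Longrightarrow> \<phi> (\<gamma> z) = \<phi> z" using gam unfolding deck_group_def by blast+
  have inj: "inj_on \<gamma> (ball 0 1)" and im: "\<gamma> ` ball 0 1 = ball 0 1" using bij unfolding bij_betw_def by blast+
  obtain h where hh: "h holomorphic_on (\<gamma> ` ball 0 1)" and hg: "\<And>z. z \<in> ball 0 1 \<Longrightarrow> h (\<gamma> z) = z"
    using holomorphic_has_inverse[OF hol open_ball inj] by metis
  have hcont: "continuous_on (ball 0 1) h" using hh im holomorphic_on_imp_continuous_on by metis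
  have gcont: "continuous_on (ball 0 1) \<gamma>" using hol holomorphic_on_imp_continuous_on by blast
  have Csub: "C \<subseteq> ball 0 1 \<inter> \<phi> -` W" and Cne: "C \<noteq> {}" and Ccon: "connected C"
    and Cmax: "\<And>Z. Z \<noteq> {} \<Longrightarrow> C \<subseteq> Z \<Longrightarrow> Z \<subseteq> ball 0 1 \<inter> \<phi> -` W \<Longrightarrow> connected Z \<Longrightarrow> Z = C"
    using C unfolding in_components_maximal by blast+
  show ?thesis unfolding in_components_maximal
  proof (intro conjI allI impI)
    show "\<gamma> ` C \<noteq> {}" using Cne by blast
    show "\<gamma> ` C \<subseteq> ball 0 1 \<inter> \<phi> -` W"
    proof
      fix y assume "y \<in> \<gamma> ` C"
      then obtain x where x: "x \<in> C" "y = \<gamma> x" by auto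
      then have "x \<in> ball 0 1" "\<phi> x \<in> W" using Csub by auto
      then show "y \<in> ball 0 1 \<inter> \<phi> -` W" using x im ph[of x] by auto
    qed
    show "connected (\<gamma> ` C)"
    proof -
      have "continuous_on C \<gamma>" by (rule continuous_on_subset[OF gcont]) (use Csub in blast)
      then show ?thesis using Ccon connected_continuous_image by blast
    qed
    fix Z assume Z: "Z \<noteq> {} \<and> \<gamma> ` C \<subseteq> Z \<and> Z \<subseteq> ball 0 1 \<inter> \<phi> -` W \<and> connected Z"
    have "h ` Z = C"
    proof (rule Cmax)
      show "h ` Z \<noteq> {}" using Z by blast
      show "C \<subseteq> h ` Z"
      proof
        fix c assume c: "c \<in> C"
        then have "\<gamma> c \<in> Z" "h (\<gamma> c) = c" using Z Csub hg by blast+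
        then show "c \<in> h ` Z" by (metis imageI)
      qed
      show "h ` Z \<subseteq> ball 0 1 \<inter> \<phi> -` W"
      proof
        fix y assume "y \<in> h ` Z"
        then obtain z where z: "z \<in> Z" "y = h z" by auto
        have "z \<in> ball 0 1" using z Z by blast
        then have "z \<in> \<gamma> ` ball 0 1" by (simp only: im)
        then obtain x where x: "x \<in> ball 0 1" "z = \<gamma> x" by (metis imageE)
        have "y = x" using z x hg by simp
      moreover have "\<phi> x = \<phi> z" using x ph by simp
      moreover have "\<phi> z \<in> W" using z Z by blast
      ultimately show "y \<in> ball 0 1 \<inter> \<phi> -` W" using x by simp
      qed
      have "continuous_on Z h" by (rule continuous_on_subset[OF hcont]) (use Z in blast)
      then show "connected (h ` Z)" using Z connected_continuous_image by blast
    qed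
    moreover have "\<gamma> ` (h ` Z) = Z"
    proof -
      have "\<gamma> (h z) = z" if "z \<in> Z" for z
      proof -
        have "z \<in> ball 0 1" using that Z by blast
        then have "z \<in> \<gamma> ` ball 0 1" by (simp only: im)
        then obtain x where "x \<in> ball 0 1" "z = \<gamma> x" by (metis imageE)
        then show ?thesis using hg by simp
      qed
      then show ?thesis by (simp add: image_image cong: image_cong)
    qed
    ultimately show "Z = \<gamma> ` C" by simp
  qed
qed

lemma deck_exists:
  assumes cov: "covering_space (ball 0 1) \<phi> S" and hol: "\<phi> holomorphic_on ball 0 1"
    and a: "a \<in> ball 0 1" and b: "b \<in> ball 0 1" and eq: "\<phi> a = \<phi> b"
  shows "\<exists>\<gamma>\<in>deck_group \<phi>. \<gamma> b = a"
proof -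
  have sc: "simply_connected (ball (0::complex) 1)" by (simp add: convex_imp_simply_connected)
  have lpc: "locally path_connected (ball (0::complex) 1)" by (simp add: open_imp_locally_path_connected)
  have contp: "continuous_on (ball 0 1) \<phi>" using cov covering_space_imp_continuous by blast
  have pim: "\<phi> \<in> ball 0 1 \<rightarrow> S" using cov covering_space_imp_surjective by blast
  obtain \<gamma> where g: "continuous_on (ball 0 1) \<gamma>" "\<gamma> \<in> ball 0 1 \<rightarrow> ball 0 1" "\<gamma> b = a"
      "\<And>z. z\<in>ball 0 1 \<Longrightarrow> \<phi> (\<gamma> z) = \<phi> z"
    using covering_space_lift_strong[OF cov a b sc lpc contp pim eq[symmetric]] by blast
  obtain \<delta> where d: "continuous_on (ball 0 1) \<delta>" "\<delta> \<in> ball 0 1 \<rightarrow> ball 0 1" "\<delta> a = b"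
      "\<And>z. z\<in>ball 0 1 \<Longrightarrow> \<phi> (\<delta> z) = \<phi> z"
    using covering_space_lift_strong[OF cov b a sc lpc contp pim eq] by blast
  have inv: "\<gamma>' (\<gamma>'' x) = x" if x: "x \<in> ball 0 1" and 
      c1: "continuous_on (ball 0 1) \<gamma>'" "\<gamma>' \<in> ball 0 1 \<rightarrow> ball 0 1" "\<And>z. z\<in>ball 0 1 \<Longrightarrow> \<phi> (\<gamma>' z) = \<phi> z"
      and c2: "continuous_on (ball 0 1) \<gamma>''" "\<gamma>'' \<in> ball 0 1 \<rightarrow> ball 0 1" "\<And>z. z\<in>ball 0 1 \<Longrightarrow> \<phi> (\<gamma>'' z) = \<phi> z"
      and p: "p \<in> ball 0 1" "\<gamma>' (\<gamma>'' p) = p" for x \<gamma>' \<gamma>'' p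
  proof -
    have "(\<gamma>' \<circ> \<gamma>'') x = id x"
    proof (rule covering_space_lift_unique[OF cov, of "\<gamma>' \<circ> \<gamma>''" p id "ball 0 1" \<phi>])
      show "continuous_on (ball 0 1) (\<gamma>' \<circ> \<gamma>'')"
      proof (rule continuous_on_compose[OF c2(1)])
        show "continuous_on (\<gamma>'' ` ball 0 1) \<gamma>'"
          by (rule continuous_on_subset[OF c1(1)]) (use c2(2) in blast)
      qed
      show "(\<gamma>' \<circ> \<gamma>'') p = id p" using p by simp
      show "continuous_on (ball 0 1) \<phi>" by (rule contp)
      show "\<phi> \<in> ball 0 1 \<rightarrow> S" by (rule pim)
      show "\<gamma>' \<circ> \<gamma>'' \<in> ball 0 1 \<rightarrow> ball 0 1" using c1(2) c2(2) by (simp add: Pi_iff)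
      show "\<phi> z = \<phi> ((\<gamma>' \<circ> \<gamma>'') z)" if "z \<in> ball 0 1" for z
      proof -
        have "\<gamma>'' z \<in> ball 0 1" using c2(2) that by (simp add: Pi_iff)
        then show ?thesis using c1(3) c2(3) that by simp
      qed
      show "continuous_on (ball 0 1) id" by (simp add: id_def)
      show "id \<in> ball 0 1 \<rightarrow> ball (0::complex) 1" by simp
      show "\<phi> z = \<phi> (id z)" for z by simp
      show "connected (ball (0::complex) 1)" by simp
      show "p \<in> ball 0 1" "x \<in> ball 0 1" using p x by auto
    qed
    then show ?thesis by simp
  qed
  have e1: "\<delta> (\<gamma> b) = b" using g(3) d(3) by simp
  have e2: "\<gamma> (\<delta> a) = a" using g(3) d(3) by simp
  have dg: "\<delta> (\<gamma> x) = x" if "x \<in> ball 0 1" for x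
    by (rule inv[OF that d(1,2,4) g(1,2,4) b e1])
  have gd: "\<gamma> (\<delta> x) = x" if "x \<in> ball 0 1" for x
    by (rule inv[OF that g(1,2,4) d(1,2,4) a e2])
  have "\<gamma> holomorphic_on ball 0 1"
    by (rule covering_space_lift_is_holomorphic[OF cov open_ball hol hol pim g(2) g(1) g(4)])
  moreover have "bij_betw \<gamma> (ball 0 1) (ball 0 1)"
  proof (rule bij_betw_byWitness[of _ \<delta>])
    show "\<forall>x\<in>ball 0 1. \<delta> (\<gamma> x) = x" using dg by blast
    show "\<forall>x\<in>ball 0 1. \<gamma> (\<delta> x) = x" using gd by blast
    show "\<gamma> ` ball 0 1 \<subseteq> ball 0 1" using g(2) by (simp add: image_subset_iff_funcset)
    show "\<delta> ` ball 0 1 \<subseteq> ball 0 1" using d(2) by (simp add: image_subset_iff_funcset)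
  qed
  moreover have "\<forall>z\<in>ball 0 1. \<phi> (\<gamma> z) = \<phi> z" using g(4) by blast
  ultimately have "\<gamma> \<in> deck_group \<phi>" unfolding deck_group_def by blast
  then show ?thesis using g(3) by blast
qed

lemma deck_trans:
  assumes cov: "covering_space (ball 0 1) \<phi> S" and hol: "\<phi> holomorphic_on ball 0 1"
    and A: "A \<in> components (ball 0 1 \<inter> \<phi> -` W)" and B: "B \<in> components (ball 0 1 \<inter> \<phi> -` W)"
    and int: "\<phi> ` A \<inter> \<phi> ` B \<noteq> {}"
  shows "\<exists>\<gamma>\<in>deck_group \<phi>. \<gamma> ` A = B"
proof -
  obtain y where "y \<in> \<phi> ` A" "y \<in> \<phi> ` B" using int by blast
  then obtain a b where ab: "a \<in> A" "b \<in> B" "\<phi> a = \<phi> b" by (metis imageE)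
  have "A \<subseteq> ball 0 1" "B \<subseteq> ball 0 1" using A B in_components_subset by blast+
  then have "a \<in> ball 0 1" "b \<in> ball 0 1" using ab by blast+
  then have "\<exists>\<gamma>\<in>deck_group \<phi>. \<gamma> a = b"
    by (intro deck_exists[OF cov hol]) (use ab in simp_all)
  then obtain \<gamma> where g: "\<gamma> \<in> deck_group \<phi>" "\<gamma> a = b" by blast
  have gA: "\<gamma> ` A \<in> components (ball 0 1 \<inter> \<phi> -` W)" by (rule deck_components[OF g(1) A])
  have "b \<in> \<gamma> ` A" using ab g by (metis imageI)
  then have "\<gamma> ` A \<inter> B \<noteq> {}" using ab by blast
  then have "\<gamma> ` A = B" using components_eq[OF gA B] by simp
  then show ?thesis using g by blast
qed


locale lift_setup =
  fixes \<phi> f :: "complex \<Rightarrow> complex" and U J :: "complex set" and Us Vs :: "nat \<Rightarrow> complex set"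
    and N d :: nat and g :: "nat \<Rightarrow> complex \<Rightarrow> complex" and idx :: "nat \<Rightarrow> nat"
  assumes cov: "covering_space (ball 0 1) \<phi> (U - J)"
    and phi_hol: "\<phi> holomorphic_on ball 0 1"
    and Us_open: "\<And>i. i < N \<Longrightarrow> open (Us i)"
    and Us_disj: "\<And>i j. i < N \<Longrightarrow> j < N \<Longrightarrow> i \<noteq> j \<Longrightarrow> Us i \<inter> Us j = {}"
    and Vs: "\<And>i. i < N \<Longrightarrow> Vs i \<in> components (ball 0 1 \<inter> \<phi> -` (Us i - J))"
    and g_hol: "\<And>j. j < d \<Longrightarrow> g j holomorphic_on ball 0 1"
    and g_inj: "\<And>j. j < d \<Longrightarrow> inj_on (g j) (ball 0 1)"
    and g_lift: "\<And>j z. j < d \<Longrightarrow> z \<in> ball 0 1 \<Longrightarrow> f (\<phi> (g j z)) = \<phi> z"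
    and g_img: "\<And>j. j < d \<Longrightarrow> g j ` ball 0 1 = Vs (idx j)"
    and idx: "\<And>j. j < d \<Longrightarrow> idx j < N"
begin

primrec Om :: "nat \<Rightarrow> complex set" where
  "Om 0 = U - J"
| "Om (Suc m) = {z. z \<in> (\<Union>i<N. Us i) \<and> z \<notin> J \<and> f z \<in> Om m}"

lemma step_comp:
  assumes j: "j < d" and Y: "Y \<in> components (ball 0 1 \<inter> \<phi> -` Om m)"
  shows "g j ` Y \<in> components (ball 0 1 \<inter> \<phi> -` Om (Suc m))"
proof -
  define i where "i = idx j"
  have i: "i < N" using idx j i_def by simp
  have Vi: "Vs i \<in> components (ball 0 1 \<inter> \<phi> -` (Us i - J))" using Vs i by blast
  have Vsub: "Vs i \<subseteq> ball 0 1 \<inter> \<phi> -` (Us i - J)" using in_components_subset[OF Vi] .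
  have Vcon: "connected (Vs i)" using in_components_connected[OF Vi] .
  have Vmax: "\<And>Z. Z \<noteq> {} \<Longrightarrow> Vs i \<subseteq> Z \<Longrightarrow> Z \<subseteq> ball 0 1 \<inter> \<phi> -` (Us i - J) \<Longrightarrow> connected Z \<Longrightarrow> Z = Vs i"
    using Vi unfolding in_components_maximal by blast
  have gimg: "g j ` ball 0 1 = Vs i" using g_img j i_def by simp
  have Ysub: "Y \<subseteq> ball 0 1 \<inter> \<phi> -` Om m" and Yne: "Y \<noteq> {}" and Ycon: "connected Y"
    using Y unfolding in_components_maximal by blast+
  have Ymax: "\<And>Z. Z \<noteq> {} \<Longrightarrow> Y \<subseteq> Z \<Longrightarrow> Z \<subseteq> ball 0 1 \<inter> \<phi> -` Om m \<Longrightarrow> connected Z \<Longrightarrow> Z = Y"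
    using Y unfolding in_components_maximal by blast
  obtain h where hh: "h holomorphic_on (g j ` ball 0 1)" and hg: "\<And>z. z \<in> ball 0 1 \<Longrightarrow> h (g j z) = z"
    using holomorphic_has_inverse[OF g_hol[OF j] open_ball g_inj[OF j]] by metis
  have hcont: "continuous_on (Vs i) h" using hh gimg holomorphic_on_imp_continuous_on by metis
  have gcont: "continuous_on (ball 0 1) (g j)" using g_hol[OF j] holomorphic_on_imp_continuous_on by blast
  have phicont: "continuous_on (ball 0 1) \<phi>" using cov covering_space_imp_continuous by blast
  have Xin: "g j y \<in> ball 0 1 \<inter> \<phi> -` Om (Suc m)" if "y \<in> Y" for y
  proof -
    have yb: "y \<in> ball 0 1" "\<phi> y \<in> Om m" using that Ysub by blast+
    have "g j y \<in> Vs i" using yb(1) gimg by blast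
    then have gy: "g j y \<in> ball 0 1" "\<phi> (g j y) \<in> Us i" "\<phi> (g j y) \<notin> J" using Vsub by blast+
    have "\<phi> (g j y) \<in> (\<Union>i<N. Us i)" using gy(2) i by blast
    moreover have "f (\<phi> (g j y)) \<in> Om m" using g_lift[OF j yb(1)] yb(2) by simp
    ultimately show ?thesis using gy by simp
  qed
  have XV: "g j ` Y \<subseteq> Vs i" using Ysub gimg by blast
  show ?thesis unfolding in_components_maximal
  proof (intro conjI allI impI)
    show "g j ` Y \<noteq> {}" using Yne by blast
    show "g j ` Y \<subseteq> ball 0 1 \<inter> \<phi> -` Om (Suc m)" using Xin by blast
    have "continuous_on Y (g j)" by (rule continuous_on_subset[OF gcont]) (use Ysub in blast)
    then show "connected (g j ` Y)" using Ycon connected_continuous_image by blast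
  next
    fix Z assume Z: "Z \<noteq> {} \<and> g j ` Y \<subseteq> Z \<and> Z \<subseteq> ball 0 1 \<inter> \<phi> -` Om (Suc m) \<and> connected Z"
    have Zb: "Z \<subseteq> ball 0 1" and Zc: "connected Z" and XZ: "g j ` Y \<subseteq> Z" using Z by blast+
    have Zom: "\<phi> z \<in> (\<Union>i<N. Us i) \<and> \<phi> z \<notin> J \<and> f (\<phi> z) \<in> Om m" if "z \<in> Z" for z
    proof -
      have "\<phi> z \<in> Om (Suc m)" using Z that by blast
      then show ?thesis by simp
    qed
    have phZ: "\<phi> ` Z \<subseteq> Us i"
    proof (rule ccontr)
      assume nsub: "\<not> \<phi> ` Z \<subseteq> Us i"
      define E where "E = (\<Union>k\<in>{k. k<N \<and> k \<noteq> i}. Us k)"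
      have o1: "open (Us i)" using Us_open i by blast
      have o2: "open E" unfolding E_def using Us_open by blast
      have cZ: "connected (\<phi> ` Z)"
      proof -
        have "continuous_on Z \<phi>" by (rule continuous_on_subset[OF phicont Zb])
        then show ?thesis using Zc connected_continuous_image by blast
      qed
      have cov2: "\<phi> ` Z \<subseteq> Us i \<union> E"
      proof
        fix y assume "y \<in> \<phi> ` Z"
        then obtain z where z: "z \<in> Z" "y = \<phi> z" by blast
        then obtain k where k: "k < N" "y \<in> Us k" using Zom[OF z(1)] by blast
        show "y \<in> Us i \<union> E"
        proof (cases "k = i")
          case True then show ?thesis using k by blast
        next
          case False then show ?thesis using k unfolding E_def by blast
        qed
      qed
      have dis: "Us i \<inter> E \<inter> \<phi> ` Z = {}"
      proof -
        have "Us i \<inter> Us k = {}" if "k < N" "k \<noteq> i" for k using Us_disj[OF i that(1)] that(2) by metis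
        then show ?thesis unfolding E_def by blast
      qed
      from connectedD[OF cZ o1 o2 dis cov2] have "Us i \<inter> \<phi> ` Z = {} \<or> E \<inter> \<phi> ` Z = {}" .
      moreover obtain y where "y \<in> Y" using Yne by blast
      then have "g j y \<in> Z" "\<phi> (g j y) \<in> Us i" using XZ XV Vsub by blast+
      then have "Us i \<inter> \<phi> ` Z \<noteq> {}" by blast
      moreover have "E \<inter> \<phi> ` Z \<noteq> {}" using nsub cov2 by blast
      ultimately show False by blast
    qed
    have Zsub: "Z \<subseteq> ball 0 1 \<inter> \<phi> -` (Us i - J)"
    proof
      fix z assume z: "z \<in> Z"
      then show "z \<in> ball 0 1 \<inter> \<phi> -` (Us i - J)" using Zb phZ Zom[OF z] by blast
    qed
    have "Z \<union> Vs i = Vs i"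
    proof (rule Vmax)
      show "Z \<union> Vs i \<noteq> {}" using Z by blast
      show "Vs i \<subseteq> Z \<union> Vs i" by blast
      show "Z \<union> Vs i \<subseteq> ball 0 1 \<inter> \<phi> -` (Us i - J)" using Zsub Vsub by blast
      have "Z \<inter> Vs i \<noteq> {}" using XZ XV Yne by blast
      then show "connected (Z \<union> Vs i)" using connected_Un[OF Zc Vcon] by blast
    qed
    then have ZV: "Z \<subseteq> Vs i" by blast
    have hZ: "h ` Z = Y"
    proof (rule Ymax)
      show "h ` Z \<noteq> {}" using Z by blast
      show "Y \<subseteq> h ` Z"
      proof
        fix y assume y: "y \<in> Y"
        then have "g j y \<in> Z" "h (g j y) = y" using XZ Ysub hg by blast+
        then show "y \<in> h ` Z" by (metis imageI)
      qed
      show "h ` Z \<subseteq> ball 0 1 \<inter> \<phi> -` Om m"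
      proof
        fix y assume "y \<in> h ` Z"
        then obtain z where z: "z \<in> Z" "y = h z" by blast
        have "z \<in> g j ` ball 0 1" using ZV z(1) gimg by blast
        then obtain x where x: "x \<in> ball 0 1" "z = g j x" by (metis imageE)
        have yx: "y = x" using z x hg by simp
        have "\<phi> x = f (\<phi> z)" using g_lift[OF j x(1)] x(2) by simp
        then have "\<phi> x \<in> Om m" using Zom[OF z(1)] by simp
        then show "y \<in> ball 0 1 \<inter> \<phi> -` Om m" using x(1) yx by simp
      qed
      have "continuous_on Z h" by (rule continuous_on_subset[OF hcont ZV])
      then show "connected (h ` Z)" using Zc connected_continuous_image by blast
    qed
    have "g j (h z) = z" if "z \<in> Z" for z
    proof -
      have "z \<in> g j ` ball 0 1" using ZV that gimg by blast
      then obtain x where "x \<in> ball 0 1" "z = g j x" by (metis imageE)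
      then show ?thesis using hg by simp
    qed
    then have "g j ` (h ` Z) = Z" by (simp add: image_image cong: image_cong)
    then show "Z = g j ` Y" using hZ by simp
  qed
qed

end

context lift_setup
begin

primrec Hc :: "(nat list \<Rightarrow> complex \<Rightarrow> complex) \<Rightarrow> nat list \<Rightarrow> complex \<Rightarrow> complex" where
  "Hc c [] = id"
| "Hc c (e # r) = c (e # r) \<circ> g e \<circ> Hc c r"

definition Vc :: "(nat list \<Rightarrow> complex \<Rightarrow> complex) \<Rightarrow> nat list \<Rightarrow> complex set" where
  "Vc c eps = Hc c eps ` ball 0 1"

lemma Vc_Nil: "Vc c [] = ball 0 1" by (simp add: Vc_def)

lemma Vc_Cons: "Vc c (e # r) = c (e # r) ` g e ` Vc c r"
  by (simp add: Vc_def image_comp)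

lemma Hc_agree: "(\<forall>e. length e \<le> length eps \<longrightarrow> c1 e = c2 e) \<Longrightarrow> Hc c1 eps = Hc c2 eps"
proof (induction eps)
  case Nil then show ?case by simp
next
  case (Cons a eps)
  have "Hc c1 eps = Hc c2 eps" using Cons by simp
  moreover have "c1 (a # eps) = c2 (a # eps)" using Cons.prems by blast
  ultimately show ?case by simp
qed

definition Pk :: "nat \<Rightarrow> (nat list \<Rightarrow> complex \<Rightarrow> complex) \<Rightarrow> bool" where
  "Pk k c \<longleftrightarrow> (\<forall>eps. set eps \<subseteq> {..<d} \<and> length eps \<le> k \<longrightarrow>
     (eps \<noteq> [] \<longrightarrow> c eps \<in> deck_group \<phi>) \<and>
     Vc c eps \<in> components (ball 0 1 \<inter> \<phi> -` Om (length eps)) \<and>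
     (2 \<le> length eps \<longrightarrow> Vc c eps \<subseteq> Vc c (butlast eps)) \<and>
     (\<forall>eps'. set eps' \<subseteq> {..<d} \<and> length eps' = length eps \<and> \<phi> ` Vc c eps = \<phi> ` Vc c eps' \<longrightarrow>
        Vc c eps = Vc c eps'))"

lemma Pk0: "Pk 0 (\<lambda>_. id)"
  unfolding Pk_def
proof (intro allI impI)
  fix eps :: "nat list" assume "set eps \<subseteq> {..<d} \<and> length eps \<le> 0"
  then have e: "eps = []" by simp
  have "ball 0 1 \<inter> \<phi> -` Om 0 = ball 0 1" using covering_space_imp_surjective[OF cov] by auto
  moreover have "components (ball (0::complex) 1) = {ball 0 1}" by (simp add: components_eq_sing_iff)
  ultimately have "Vc (\<lambda>_. id) [] \<in> components (ball 0 1 \<inter> \<phi> -` Om (length ([]::nat list)))"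
    by (simp add: Vc_Nil)
  then show "(eps \<noteq> [] \<longrightarrow> id \<in> deck_group \<phi>) \<and>
     Vc (\<lambda>_. id) eps \<in> components (ball 0 1 \<inter> \<phi> -` Om (length eps)) \<and>
     (2 \<le> length eps \<longrightarrow> Vc (\<lambda>_. id) eps \<subseteq> Vc (\<lambda>_. id) (butlast eps)) \<and>
     (\<forall>eps'. set eps' \<subseteq> {..<d} \<and> length eps' = length eps \<and> \<phi> ` Vc (\<lambda>_. id) eps = \<phi> ` Vc (\<lambda>_. id) eps' \<longrightarrow>
        Vc (\<lambda>_. id) eps = Vc (\<lambda>_. id) eps')"
    using e by simp
qed


lemma Pk_ext:
  assumes P: "Pk k c"
  shows "\<exists>c'. Pk (Suc k) c' \<and> (\<forall>eps. length eps \<le> k \<longrightarrow> c' eps = c eps)"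
proof -
  have Pdeck: "c eps \<in> deck_group \<phi>" if "set eps \<subseteq> {..<d}" "length eps \<le> k" "eps \<noteq> []" for eps
    using P that unfolding Pk_def by blast
  have Pcomp: "Vc c eps \<in> components (ball 0 1 \<inter> \<phi> -` Om (length eps))"
    if "set eps \<subseteq> {..<d}" "length eps \<le> k" for eps
    using P that unfolding Pk_def by blast
  have Pnest: "Vc c eps \<subseteq> Vc c (butlast eps)" if "set eps \<subseteq> {..<d}" "length eps \<le> k" "2 \<le> length eps" for eps
    using P that unfolding Pk_def by blast
  have Puniq: "Vc c eps = Vc c eps'" if "set eps \<subseteq> {..<d}" "length eps \<le> k" "set eps' \<subseteq> {..<d}"
    "length eps' = length eps" "\<phi> ` Vc c eps = \<phi> ` Vc c eps'" for eps eps'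
  proof -
    have "\<forall>eps'. set eps' \<subseteq> {..<d} \<and> length eps' = length eps \<and> \<phi> ` Vc c eps = \<phi> ` Vc c eps' \<longrightarrow>
        Vc c eps = Vc c eps'" using P that(1,2) unfolding Pk_def by blast
    then show ?thesis using that(3-5) by blast
  qed
  define L where "L = {eps. set eps \<subseteq> {..<d} \<and> length eps = Suc k}"
  define A where "A eps = g (hd eps) ` Vc c (tl eps)" for eps
  define B where "B eps = Vc c (butlast eps)" for eps
  have Lcons: "\<exists>e r. eps = e # r \<and> e < d \<and> set r \<subseteq> {..<d} \<and> length r = k" if eL0: "eps \<in> L" for eps
  proof (cases eps)
    case Nil then show ?thesis using that unfolding L_def by simp
  next
    case (Cons e r) then show ?thesis using that unfolding L_def by auto
  qed
  have Lbut: "set (butlast eps) \<subseteq> {..<d} \<and> length (butlast eps) = k" if eL0: "eps \<in> L" for eps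
    using that unfolding L_def by (auto dest: in_set_butlastD)
  have Acomp: "A eps \<in> components (ball 0 1 \<inter> \<phi> -` Om (Suc k))" if eL0: "eps \<in> L" for eps
  proof -
    have "\<exists>e r. eps = e # r \<and> e < d \<and> set r \<subseteq> {..<d} \<and> length r = k" by (rule Lcons[OF that])
    then obtain e r where er: "eps = e # r" "e < d" "set r \<subseteq> {..<d}" "length r = k" by blast
    have "Vc c r \<in> components (ball 0 1 \<inter> \<phi> -` Om k)" using Pcomp[OF er(3)] er(4) by simp
    from step_comp[OF er(2) this] show ?thesis unfolding A_def using er(1) by simp
  qed
  have Asub: "A eps \<subseteq> ball 0 1" and Ane: "A eps \<noteq> {}" if eL0: "eps \<in> L" for eps
    using Acomp[OF that] in_components_subset in_components_nonempty by blast+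
  have Bcomp: "B eps \<in> components (ball 0 1 \<inter> \<phi> -` Om k)" if eL0: "eps \<in> L" for eps
    using Pcomp[of "butlast eps"] Lbut[OF that] unfolding B_def by simp
  have AB: "\<exists>\<gamma>\<in>deck_group \<phi>. \<gamma> ` A eps \<subseteq> B eps" if eL0: "eps \<in> L" for eps
  proof -
    have "\<exists>e r. eps = e # r \<and> e < d \<and> set r \<subseteq> {..<d} \<and> length r = k" by (rule Lcons[OF that])
    then obtain e r where er: "eps = e # r" "e < d" "set r \<subseteq> {..<d}" "length r = k" by blast
    show ?thesis
    proof (cases "r = []")
      case True
      have "A eps \<subseteq> ball 0 1" by (rule Asub[OF that])
      moreover have "B eps = ball 0 1" unfolding B_def using er(1) True by (simp add: Vc_Nil)
      ultimately have "id ` A eps \<subseteq> B eps" by simp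
      then show ?thesis using deck_id by blast
    next
      case False
      have bl: "butlast eps = e # butlast r" using er(1) False by simp
      have rsub: "Vc c r \<subseteq> Vc c (butlast r)"
      proof (cases "2 \<le> length r")
        case True then show ?thesis using Pnest[OF er(3)] er(4) by simp
      next
        case False
        moreover have "length r \<noteq> 0" using \<open>r \<noteq> []\<close> by simp
        ultimately have "length r = 1" by linarith
        then have "butlast r = []" by (simp add: length_0_conv[symmetric])
        moreover have "Vc c r \<subseteq> ball 0 1" using Pcomp[OF er(3)] er(4) in_components_subset by fastforce
        ultimately show ?thesis by (simp add: Vc_Nil)
      qed
      have "B eps = c (e # butlast r) ` g e ` Vc c (butlast r)" unfolding B_def bl Vc_Cons ..
      moreover have "A eps = g e ` Vc c r" unfolding A_def using er(1) by simp
      ultimately have "c (e # butlast r) ` A eps \<subseteq> B eps" using rsub by blast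
      moreover have "c (e # butlast r) \<in> deck_group \<phi>"
      proof (rule Pdeck)
        show "set (e # butlast r) \<subseteq> {..<d}" using Lbut[OF that] bl by simp
        show "length (e # butlast r) \<le> k" using Lbut[OF that] bl by simp
      qed simp
      ultimately show ?thesis by blast
    qed
  qed
  have phiAB: "\<phi> ` A eps \<subseteq> \<phi> ` B eps" if eL0: "eps \<in> L" for eps
  proof -
    obtain \<gamma> where "\<gamma> \<in> deck_group \<phi>" "\<gamma> ` A eps \<subseteq> B eps" using AB[OF eL0] by blast
    note gg = this
    have "\<phi> ` (\<gamma> ` A eps) = \<phi> ` A eps" by (rule deck_phi_image[OF gg(1) Asub[OF eL0]])
    moreover have "\<phi> ` (\<gamma> ` A eps) \<subseteq> \<phi> ` B eps" by (rule image_mono[OF gg(2)])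
    ultimately show ?thesis by simp
  qed
  have Beq: "B eps = B eps0" if bq: "eps \<in> L" "eps0 \<in> L" "\<phi> ` A eps = \<phi> ` A eps0" for eps eps0
  proof -
    obtain a where a: "a \<in> A eps" using Ane[OF bq(1)] by blast
    have "\<phi> a \<in> \<phi> ` A eps" using a by (rule imageI)
    then have "\<phi> a \<in> \<phi> ` B eps" "\<phi> a \<in> \<phi> ` B eps0" using phiAB[OF bq(1)] phiAB[OF bq(2)] bq(3) by blast+
    then have "\<phi> ` B eps \<inter> \<phi> ` B eps0 \<noteq> {}" by blast
    then obtain \<delta> where "\<delta> \<in> deck_group \<phi>" "\<delta> ` B eps = B eps0"
      using deck_trans[OF cov phi_hol Bcomp[OF bq(1)] Bcomp[OF bq(2)]] by blast
    note dd = this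
    have "B eps \<subseteq> ball 0 1" using Bcomp[OF that(1)] in_components_subset by blast
    then have "\<phi> ` (\<delta> ` B eps) = \<phi> ` B eps" by (rule deck_phi_image[OF dd(1)])
    then have "\<phi> ` B eps = \<phi> ` B eps0" using dd(2) by simp
    then show ?thesis unfolding B_def
      by (intro Puniq) (use Lbut[OF that(1)] Lbut[OF that(2)] in simp_all)
  qed
  define R where "R eps = (SOME e0. e0 \<in> L \<and> \<phi> ` A e0 = \<phi> ` A eps)" for eps
  have R: "R eps \<in> L \<and> \<phi> ` A (R eps) = \<phi> ` A eps" if eL0: "eps \<in> L" for eps
    unfolding R_def by (rule someI[of _ eps]) (use that in simp)
  define G0 where "G0 eps = (SOME \<gamma>. \<gamma> \<in> deck_group \<phi> \<and> \<gamma> ` A eps \<subseteq> B eps)" for eps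
  have G0: "G0 eps \<in> deck_group \<phi> \<and> G0 eps ` A eps \<subseteq> B eps" if eL0: "eps \<in> L" for eps
  proof -
    obtain \<gamma> where "\<gamma> \<in> deck_group \<phi>" "\<gamma> ` A eps \<subseteq> B eps" using AB[OF eL0] by blast
    then have "\<gamma> \<in> deck_group \<phi> \<and> \<gamma> ` A eps \<subseteq> B eps" by (rule conjI)
    then show ?thesis unfolding G0_def by (rule someI[of _ \<gamma>])
  qed
  define T where "T eps = G0 (R eps) ` A (R eps)" for eps
  have Tex: "\<exists>\<gamma>. \<gamma> \<in> deck_group \<phi> \<and> \<gamma> ` A eps = T eps" if eL0: "eps \<in> L" for eps
  proof -
    have RL: "R eps \<in> L" and RA: "\<phi> ` A (R eps) = \<phi> ` A eps" using R[OF that] by blast+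
    obtain a where a: "a \<in> A eps" using Ane[OF eL0] by blast
    have "\<phi> a \<in> \<phi> ` A eps" using a by (rule imageI)
    then have "\<phi> a \<in> \<phi> ` A eps \<inter> \<phi> ` A (R eps)" using RA by simp
    then have "\<phi> ` A eps \<inter> \<phi> ` A (R eps) \<noteq> {}" by blast
    then obtain \<delta> where dl: "\<delta> \<in> deck_group \<phi>" "\<delta> ` A eps = A (R eps)"
      using deck_trans[OF cov phi_hol Acomp[OF eL0] Acomp[OF RL]] by blast
    have dc: "G0 (R eps) \<circ> \<delta> \<in> deck_group \<phi>" by (rule deck_comp[OF conjunct1[OF G0[OF RL]] dl(1)])
    have "(G0 (R eps) \<circ> \<delta>) ` A eps = G0 (R eps) ` (\<delta> ` A eps)" by (simp only: image_comp)
    then have "(G0 (R eps) \<circ> \<delta>) ` A eps = T eps" unfolding T_def using dl(2) by simp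
    then show ?thesis using dc by blast
  qed
  define c' where "c' eps = (if length eps \<le> k then c eps else if eps \<in> L then
      (SOME \<gamma>. \<gamma> \<in> deck_group \<phi> \<and> \<gamma> ` A eps = T eps) else c eps)" for eps
  have c'L: "c' eps \<in> deck_group \<phi> \<and> c' eps ` A eps = T eps" if eL0: "eps \<in> L" for eps
  proof -
    have "\<not> length eps \<le> k" using that unfolding L_def by simp
    then have "c' eps = (SOME \<gamma>. \<gamma> \<in> deck_group \<phi> \<and> \<gamma> ` A eps = T eps)" unfolding c'_def using that by simp
    then show ?thesis using someI_ex[OF Tex[OF that]] by simp
  qed
  have c'le: "c' eps = c eps" if "length eps \<le> k" for eps using that unfolding c'_def by simp
  have Vc_eq: "Vc c' eps = Vc c eps" if "length eps \<le> k" for eps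
  proof -
    have "Hc c' eps = Hc c eps" by (rule Hc_agree) (use that c'le in auto)
    then show ?thesis by (simp add: Vc_def)
  qed
  have VcL: "Vc c' eps = T eps" if eL0: "eps \<in> L" for eps
  proof -
    have "\<exists>e r. eps = e # r \<and> e < d \<and> set r \<subseteq> {..<d} \<and> length r = k" by (rule Lcons[OF that])
    then obtain e r where er: "eps = e # r" "e < d" "set r \<subseteq> {..<d}" "length r = k" by blast
    have "Vc c' eps = c' eps ` g e ` Vc c' r" using er(1) Vc_Cons by simp
    also have "\<dots> = c' eps ` A eps" unfolding A_def using er(1) Vc_eq[of r] er(4) by simp
    also have "\<dots> = T eps" using c'L[OF that] by blast
    finally show ?thesis .
  qed
  have TphiA: "\<phi> ` T eps = \<phi> ` A eps" if eL0: "eps \<in> L" for eps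
  proof -
    have RL: "R eps \<in> L" and RA: "\<phi> ` A (R eps) = \<phi> ` A eps" using R[OF that] by blast+
    have "\<phi> ` T eps = \<phi> ` A (R eps)" unfolding T_def by (rule deck_phi_image[OF conjunct1[OF G0[OF RL]] Asub[OF RL]])
    then show ?thesis using RA by simp
  qed
  have Tcomp: "T eps \<in> components (ball 0 1 \<inter> \<phi> -` Om (Suc k))" if eL0: "eps \<in> L" for eps
  proof -
    have RL: "R eps \<in> L" using R[OF that] by blast
    show ?thesis unfolding T_def by (rule deck_components[OF conjunct1[OF G0[OF RL]] Acomp[OF RL]])
  qed
  have Tsub: "T eps \<subseteq> B eps" if eL0: "eps \<in> L" for eps
  proof -
    have RL: "R eps \<in> L" and RA: "\<phi> ` A (R eps) = \<phi> ` A eps" using R[OF that] by blast+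
    have "T eps \<subseteq> B (R eps)" unfolding T_def using G0[OF RL] by blast
    also have "B (R eps) = B eps" using Beq[OF RL that RA] .
    finally show ?thesis .
  qed
  have "Pk (Suc k) c'"
    unfolding Pk_def
  proof (intro allI impI)
    fix eps :: "nat list" assume eps: "set eps \<subseteq> {..<d} \<and> length eps \<le> Suc k"
    show "(eps \<noteq> [] \<longrightarrow> c' eps \<in> deck_group \<phi>) \<and>
     Vc c' eps \<in> components (ball 0 1 \<inter> \<phi> -` Om (length eps)) \<and>
     (2 \<le> length eps \<longrightarrow> Vc c' eps \<subseteq> Vc c' (butlast eps)) \<and>
     (\<forall>eps'. set eps' \<subseteq> {..<d} \<and> length eps' = length eps \<and> \<phi> ` Vc c' eps = \<phi> ` Vc c' eps' \<longrightarrow>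
        Vc c' eps = Vc c' eps')"
    proof (cases "length eps \<le> k")
      case True
      have s: "set eps \<subseteq> {..<d}" using eps by blast
      have bl: "length (butlast eps) \<le> k" using True by simp
      show ?thesis
      proof (intro conjI impI allI)
        show "eps \<noteq> [] \<Longrightarrow> c' eps \<in> deck_group \<phi>" using Pdeck[OF s True] c'le[OF True] by simp
        show "Vc c' eps \<in> components (ball 0 1 \<inter> \<phi> -` Om (length eps))"
          using Pcomp[OF s True] Vc_eq[OF True] by simp
        show "2 \<le> length eps \<Longrightarrow> Vc c' eps \<subseteq> Vc c' (butlast eps)"
          using Pnest[OF s True] Vc_eq[OF True] Vc_eq[OF bl] by simp
        fix eps' assume e': "set eps' \<subseteq> {..<d} \<and> length eps' = length eps \<and> \<phi> ` Vc c' eps = \<phi> ` Vc c' eps'"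
        then have "length eps' \<le> k" using True by simp
        then show "Vc c' eps = Vc c' eps'" using Puniq[OF s True, of eps'] e' Vc_eq[OF True] Vc_eq[of eps'] by simp
      qed
    next
      case False
      then have eL: "eps \<in> L" using eps unfolding L_def by simp
      have bl: "length (butlast eps) \<le> k" using Lbut[OF eL] by simp
      show ?thesis
      proof (intro conjI impI allI)
        show "c' eps \<in> deck_group \<phi>" using c'L[OF eL] by blast
        show "Vc c' eps \<in> components (ball 0 1 \<inter> \<phi> -` Om (length eps))"
          using Tcomp[OF eL] VcL[OF eL] eL unfolding L_def by simp
        show "Vc c' eps \<subseteq> Vc c' (butlast eps)"
          using Tsub[OF eL] VcL[OF eL] Vc_eq[OF bl] unfolding B_def by simp
        fix eps' assume e': "set eps' \<subseteq> {..<d} \<and> length eps' = length eps \<and> \<phi> ` Vc c' eps = \<phi> ` Vc c' eps'"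
        then have eL': "eps' \<in> L" using eL unfolding L_def by simp
        have "\<phi> ` A eps = \<phi> ` A eps'" using e' VcL[OF eL] VcL[OF eL'] TphiA[OF eL] TphiA[OF eL'] by simp
        then have "R eps = R eps'" unfolding R_def by simp
        then show "Vc c' eps = Vc c' eps'" using VcL[OF eL] VcL[OF eL'] unfolding T_def by simp
      qed
    qed
  qed
  then show ?thesis using c'le by blast
qed


lemma main_exists:
  "\<exists>c. \<forall>eps. set eps \<subseteq> {..<d} \<longrightarrow> (eps \<noteq> [] \<longrightarrow> c eps \<in> deck_group \<phi>) \<and>
     (2 \<le> length eps \<longrightarrow> Vc c eps \<subseteq> Vc c (butlast eps)) \<and>
     (\<forall>eps'. set eps' \<subseteq> {..<d} \<and> length eps' = length eps \<and> \<phi> ` Vc c eps = \<phi> ` Vc c eps' \<longrightarrow>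
        Vc c eps = Vc c eps')"
proof -
  have "\<exists>C. \<forall>n. Pk n (C n) \<and> (\<lambda>n x y. \<forall>eps. length eps \<le> n \<longrightarrow> y eps = x eps) n (C n) (C (Suc n))"
  proof (rule dependent_nat_choice)
    show "\<exists>x. Pk 0 x" using Pk0 by blast
    fix x n assume "Pk n x"
    then show "\<exists>y. Pk (Suc n) y \<and> (\<forall>eps. length eps \<le> n \<longrightarrow> y eps = x eps)" by (rule Pk_ext)
  qed
  then obtain C where CP: "\<And>n. Pk n (C n)" and Cag: "\<And>n eps. length eps \<le> n \<Longrightarrow> C (Suc n) eps = C n eps"
    by blast
  have agree: "C m eps = C n eps" if "length eps \<le> n" "n \<le> m" for eps n m
    using that(2)
  proof (induction m rule: dec_induct)
    case base then show ?case by simp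
  next
    case (step m)
    have "C (Suc m) eps = C m eps" using Cag that(1) step.hyps(1) by simp
    then show ?case using step.IH by simp
  qed
  define c where "c eps = C (length eps) eps" for eps
  have VC: "Vc c eps = Vc (C n) eps" if "length eps \<le> n" for eps n
  proof -
    have "Hc c eps = Hc (C n) eps"
    proof (rule Hc_agree, intro allI impI)
      fix e :: "nat list" assume "length e \<le> length eps"
      then have "length e \<le> n" using that by simp
      then show "c e = C n e" unfolding c_def using agree[of e "length e" n] by simp
    qed
    then show ?thesis by (simp add: Vc_def)
  qed
  have "set eps \<subseteq> {..<d} \<longrightarrow> (eps \<noteq> [] \<longrightarrow> c eps \<in> deck_group \<phi>) \<and>
     (2 \<le> length eps \<longrightarrow> Vc c eps \<subseteq> Vc c (butlast eps)) \<and>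
     (\<forall>eps'. set eps' \<subseteq> {..<d} \<and> length eps' = length eps \<and> \<phi> ` Vc c eps = \<phi> ` Vc c eps' \<longrightarrow>
        Vc c eps = Vc c eps')" for eps
  proof (intro impI conjI allI)
    assume s: "set eps \<subseteq> {..<d}"
    define n where "n = length eps"
    have P: "Pk n (C n)" by (rule CP)
    have PP: "(eps \<noteq> [] \<longrightarrow> C n eps \<in> deck_group \<phi>) \<and>
     Vc (C n) eps \<in> components (ball 0 1 \<inter> \<phi> -` Om (length eps)) \<and>
     (2 \<le> length eps \<longrightarrow> Vc (C n) eps \<subseteq> Vc (C n) (butlast eps)) \<and>
     (\<forall>eps'. set eps' \<subseteq> {..<d} \<and> length eps' = length eps \<and> \<phi> ` Vc (C n) eps = \<phi> ` Vc (C n) eps' \<longrightarrow>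
        Vc (C n) eps = Vc (C n) eps')"
      using P s unfolding Pk_def n_def by blast
    have V1: "Vc c eps = Vc (C n) eps" by (rule VC) (simp add: n_def)
    have V2: "Vc c (butlast eps) = Vc (C n) (butlast eps)" by (rule VC) (simp add: n_def)
    show "eps \<noteq> [] \<Longrightarrow> c eps \<in> deck_group \<phi>" using PP unfolding c_def n_def by blast
    show "2 \<le> length eps \<Longrightarrow> Vc c eps \<subseteq> Vc c (butlast eps)" using PP V1 V2 by simp
    fix eps' assume e': "set eps' \<subseteq> {..<d} \<and> length eps' = length eps \<and> \<phi> ` Vc c eps = \<phi> ` Vc c eps'"
    have V3: "Vc c eps' = Vc (C n) eps'" by (rule VC) (use e' in \<open>simp add: n_def\<close>)
    have "\<phi> ` Vc (C n) eps = \<phi> ` Vc (C n) eps'" using e' V1 V3 by simp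
    then have "Vc (C n) eps = Vc (C n) eps'" using PP e' by blast
    then show "Vc c eps = Vc c eps'" using V1 V3 by simp
  qed
  then show ?thesis by blast
qed

lemma block_map_Hc: "block_map (\<lambda>eps l. c (drop (l - 1) eps)) g eps = Hc c eps"
proof (induction eps)
  case Nil then show ?case by (simp add: block_map_def)
next
  case (Cons e r)
  have u: "[0..<Suc (length r)] = 0 # map Suc [0..<length r]"
    by (simp only: map_Suc_upt, rule upt_conv_Cons, simp)
  define F where "F l = (\<lambda>eps l. c (drop (l - 1) eps)) (e # r) (Suc l) \<circ> g ((e # r) ! l)" for l
  have "block_map (\<lambda>eps l. c (drop (l - 1) eps)) g (e # r) = foldr (\<circ>) (map F (0 # map Suc [0..<length r])) id"
    unfolding block_map_def F_def by (simp only: length_Cons u)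
  also have "\<dots> = F 0 \<circ> foldr (\<circ>) (map (F \<circ> Suc) [0..<length r]) id" by simp
  also have "F \<circ> Suc = (\<lambda>l. c (drop l r) \<circ> g (r ! l))" by (rule ext) (simp add: F_def)
  also have "F 0 = c (e # r) \<circ> g e" by (simp add: F_def)
  finally have "block_map (\<lambda>eps l. c (drop (l - 1) eps)) g (e # r) =
      (c (e # r) \<circ> g e) \<circ> foldr (\<circ>) (map (\<lambda>l. c (drop l r) \<circ> g (r ! l)) [0..<length r]) id" .
  also have "foldr (\<circ>) (map (\<lambda>l. c (drop l r) \<circ> g (r ! l)) [0..<length r]) id = Hc c r"
    using Cons.IH unfolding block_map_def by simp
  finally show ?case by (simp add: o_assoc)
qed

end

theorem mainTheorem3:
  fixes U :: "complex set" and Us :: "nat \<Rightarrow> complex set" and N d :: nat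
    and f \<phi> :: "complex \<Rightarrow> complex" and w :: complex
    and ws :: "nat \<Rightarrow> complex" and idx :: "nat \<Rightarrow> nat"
    and Vs :: "nat \<Rightarrow> complex set" and g :: "nat \<Rightarrow> complex \<Rightarrow> complex"
  defines "U' \<equiv> (\<Union>i<N. Us i)"
  defines "J \<equiv> julia_set f U'"
  assumes U: "conf_disc U"
    and Ui: "\<And>i. i < N \<Longrightarrow> conf_disc (Us i)"
    and Ui_disj: "\<And>i j. i < N \<Longrightarrow> j < N \<Longrightarrow> i \<noteq> j \<Longrightarrow> Us i \<inter> Us j = {}"
    and relcpt: "compact (closure U')" "closure U' \<subseteq> U"
    and f_hol: "f holomorphic_on U'"
    and f_proper: "proper_on f U' U"
    and f_deg: "hol_degree f U' U d" and d_gt: "d > 1"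
    and KJ: "filled_set f U' = J"
    and cantor: "cantor_set J"
    and crit: "\<And>z. z \<in> U' \<Longrightarrow> deriv f z = 0 \<Longrightarrow> z \<in> filled_set f U'"
    and w: "w \<in> U - U'"
    and ws: "inj_on ws {..<d}" "{z\<in>U'. f z = w} = ws ` {..<d}"
    and idx: "\<And>j. j < d \<Longrightarrow> idx j < N \<and> ws j \<in> Us (idx j)"
    and phi_hol: "\<phi> holomorphic_on unit_disc"
    and phi_cov: "covering_space unit_disc \<phi> (U - J)"
    and phi0: "\<phi> 0 = w"
    and Vs: "\<And>i. i < N \<Longrightarrow> Vs i \<in> components (unit_disc \<inter> \<phi> -` (Us i - J))"
    and g_hol: "\<And>j. j < d \<Longrightarrow> g j holomorphic_on unit_disc"
    and g_inj: "\<And>j. j < d \<Longrightarrow> inj_on (g j) unit_disc"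
    and g_lift: "\<And>j z. j < d \<Longrightarrow> z \<in> unit_disc \<Longrightarrow> f (\<phi> (g j z)) = \<phi> z"
    and g0: "\<And>j. j < d \<Longrightarrow> \<phi> (g j 0) = ws j"
    and g_img: "\<And>j. j < d \<Longrightarrow> g j ` unit_disc = Vs (idx j)"
  shows "\<exists>gam :: nat list \<Rightarrow> nat \<Rightarrow> complex \<Rightarrow> complex.
     (\<forall>eps. eps \<noteq> [] \<and> set eps \<subseteq> {..<d} \<longrightarrow>
        (\<forall>l\<in>{1..length eps}. gam eps l \<in> deck_group \<phi>)) \<and>
     (\<forall>eps. length eps \<ge> 2 \<and> set eps \<subseteq> {..<d} \<longrightarrow>
        block_set gam g eps \<subseteq> block_set gam g (butlast eps)) \<and>
     (\<forall>eps. length eps \<ge> 2 \<and> set eps \<subseteq> {..<d} \<longrightarrow>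
        (\<forall>l\<in>{2..length eps}. gam eps l = gam (tl eps) (l - 1))) \<and>
     (\<forall>eps eps'. eps \<noteq> [] \<and> set eps \<subseteq> {..<d} \<and> set eps' \<subseteq> {..<d} \<and>
        length eps' = length eps \<and> \<phi> ` block_set gam g eps = \<phi> ` block_set gam g eps' \<longrightarrow>
        block_set gam g eps = block_set gam g eps')"
proof -
  have Uo: "\<And>i. i < N \<Longrightarrow> open (Us i)" using Ui unfolding conf_disc_def by blast
  have idxN: "\<And>j. j < d \<Longrightarrow> idx j < N" using idx by blast
  interpret L: lift_setup \<phi> f U J Us Vs N d g idx
  proof
    show "covering_space (ball 0 1) \<phi> (U - J)" by (rule phi_cov)
    show "\<phi> holomorphic_on ball 0 1" by (rule phi_hol)
    show "\<And>i. i < N \<Longrightarrow> open (Us i)" by (rule Uo)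
    show "\<And>i j. i < N \<Longrightarrow> j < N \<Longrightarrow> i \<noteq> j \<Longrightarrow> Us i \<inter> Us j = {}" by (rule Ui_disj)
    show "\<And>i. i < N \<Longrightarrow> Vs i \<in> components (ball 0 1 \<inter> \<phi> -` (Us i - J))" by (rule Vs)
    show "\<And>j. j < d \<Longrightarrow> g j holomorphic_on ball 0 1" by (rule g_hol)
    show "\<And>j. j < d \<Longrightarrow> inj_on (g j) (ball 0 1)" by (rule g_inj)
    show "\<And>j z. j < d \<Longrightarrow> z \<in> ball 0 1 \<Longrightarrow> f (\<phi> (g j z)) = \<phi> z" by (rule g_lift)
    show "\<And>j. j < d \<Longrightarrow> g j ` ball 0 1 = Vs (idx j)" by (rule g_img)
    show "\<And>j. j < d \<Longrightarrow> idx j < N" by (rule idxN)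
  qed
  from L.main_exists obtain c where c: "\<forall>eps. set eps \<subseteq> {..<d} \<longrightarrow> (eps \<noteq> [] \<longrightarrow> c eps \<in> deck_group \<phi>) \<and>
     (2 \<le> length eps \<longrightarrow> L.Vc c eps \<subseteq> L.Vc c (butlast eps)) \<and>
     (\<forall>eps'. set eps' \<subseteq> {..<d} \<and> length eps' = length eps \<and> \<phi> ` L.Vc c eps = \<phi> ` L.Vc c eps' \<longrightarrow>
        L.Vc c eps = L.Vc c eps')" ..
  have cx: "(eps \<noteq> [] \<longrightarrow> c eps \<in> deck_group \<phi>) \<and>
     (2 \<le> length eps \<longrightarrow> L.Vc c eps \<subseteq> L.Vc c (butlast eps)) \<and>
     (\<forall>eps'. set eps' \<subseteq> {..<d} \<and> length eps' = length eps \<and> \<phi> ` L.Vc c eps = \<phi> ` L.Vc c eps' \<longrightarrow>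
        L.Vc c eps = L.Vc c eps')" if "set eps \<subseteq> {..<d}" for eps
    using spec[OF c, of eps] that by (rule mp)
  have c1: "c eps \<in> deck_group \<phi>" if "set eps \<subseteq> {..<d}" "eps \<noteq> []" for eps
    using cx[OF that(1)] that(2) by simp
  have c2: "L.Vc c eps \<subseteq> L.Vc c (butlast eps)" if "set eps \<subseteq> {..<d}" "2 \<le> length eps" for eps
    using cx[OF that(1)] that(2) by simp
  have c3: "L.Vc c eps = L.Vc c eps'" if "set eps \<subseteq> {..<d}" "set eps' \<subseteq> {..<d}" "length eps' = length eps"
     "\<phi> ` L.Vc c eps = \<phi> ` L.Vc c eps'" for eps eps'
  proof -
    have "\<forall>eps'. set eps' \<subseteq> {..<d} \<and> length eps' = length eps \<and> \<phi> ` L.Vc c eps = \<phi> ` L.Vc c eps' \<longrightarrow>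
        L.Vc c eps = L.Vc c eps'" using cx[OF that(1)] by (rule conjunct2[OF conjunct2])
    then show ?thesis using that(2-4) by simp
  qed
  define gam where "gam = (\<lambda>eps l. c (drop (l - 1) eps))"
  have bs: "block_set gam g eps = L.Vc c eps" for eps
    unfolding block_set_def L.Vc_def gam_def L.block_map_Hc ..
  show ?thesis
  proof (rule exI[of _ gam], intro conjI allI impI ballI)
    fix eps :: "nat list" and l :: nat
    assume e: "eps \<noteq> [] \<and> set eps \<subseteq> {..<d}" and l: "l \<in> {1..length eps}"
    have "l - 1 < length eps" using l by auto
    then have ne: "drop (l - 1) eps \<noteq> []" by simp
    have ss: "set (drop (l - 1) eps) \<subseteq> {..<d}" by (rule subset_trans[OF set_drop_subset]) (use e in simp)
    show "gam eps l \<in> deck_group \<phi>" unfolding gam_def by (rule c1[OF ss ne])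
  next
    fix eps :: "nat list"
    assume e: "2 \<le> length eps \<and> set eps \<subseteq> {..<d}"
    show "block_set gam g eps \<subseteq> block_set gam g (butlast eps)" unfolding bs by (rule c2) (use e in simp_all)
  next
    fix eps :: "nat list" and l :: nat
    assume e: "2 \<le> length eps \<and> set eps \<subseteq> {..<d}" and l: "l \<in> {2..length eps}"
    have "2 \<le> l" using l by simp
    then have "l - 1 = Suc (l - 1 - 1)" by arith
    then have "drop (l - 1) eps = drop (l - 1 - 1) (tl eps)" by (metis drop_Suc)
    then show "gam eps l = gam (tl eps) (l - 1)" unfolding gam_def by simp
  next
    fix eps eps' :: "nat list"
    assume e: "eps \<noteq> [] \<and> set eps \<subseteq> {..<d} \<and> set eps' \<subseteq> {..<d} \<and>
        length eps' = length eps \<and> \<phi> ` block_set gam g eps = \<phi> ` block_set gam g eps'"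
    show "block_set gam g eps = block_set gam g eps'" unfolding bs by (rule c3) (use e in \<open>simp_all add: bs\<close>)
  qed
qed

end
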